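(* Let $\theta$ be an ordered partial action of an inverse semigroupoid $\mathcal{S}$ on a partially ordered set $X$, and let $(\eta,E,i)$ be the ordered globalization given by the globalization construction with the induced order on $E$. Then for every ordered global action $\zeta=(\{F_s\},\{\zeta_s\})$ of $\mathcal{S}$ on a poset $F$ and every ordered $\mathcal{S}$-equivariant map $j:X\to F$, there exists a unique ordered $\mathcal{S}$-equivariant map $k:E\to F$ with $k\circ i=j$; it is given by $k([s,x])=\zeta_s(j(x))$.
   Context: Inverse semigroupoid: arrows $\mathcal{S}$, objects $\mathcal{S}^{(0)}$, maps $d,c$, associative multiplication on $\mathcal{S}^{(2)}=\{(s,t):d(s)=c(t)\}$ with $d(st)=d(t)$, $c(st)=c(s)$, and unique $s^*$ with $ss^*s=s$, $s^*ss^*=s^*$; $E(\mathcal{S})$ = idempotents; natural partial order $s\leqslant t$ (for parallel $s,t$) iff $s=te$ for an idempotent $e$ with $(t,e)\in\mathcal{S}^{(2)}$. A partial action of $\mathcal{S}$ on a set $X$ is a pair $(\{X_s\},\{\theta_s\})$ of subsets $X_s\subseteq X$ and maps $\theta_s:X_{s^*}\to X_s$ such that: each $\theta_s$ is a bijection with $\theta_s^{-1}=\theta_{s^*}$ and $X=\bigcup_s X_s$; $\theta_s\circ\theta_t\subseteq\theta_{st}$ as partial maps for $(s,t)\in\mathcal{S}^{(2)}$; $X_s\subseteq X_t$ whenever $s\leqslant t$. It is global if $\theta_s\circ\theta_t=\theta_{st}$ for all $(s,t)\in\mathcal{S}^{(2)}$. When $X$ is a poset, it is an ordered partial action if each $X_s$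 is an order ideal of $X$ and each $\theta_s$ is an order isomorphism. A map $\varphi:X\to Y$ between sets with partial actions $\theta^X,\theta^Y$ is $\mathcal{S}$-equivariant if $\varphi(X_s)\subseteq Y_s$ and $\varphi(\theta^X_s(x))=\theta^Y_s(\varphi(x))$ for $x\in X_{s^*}$; it is ordered $\mathcal{S}$-equivariant if moreover order preserving. Globalization construction: let $D=\{(s,x)\in\mathcal{S}\times X: x\in X_{s^*s}\}$. Define $(s,x)\sim(t,y)$ on $D$ iff either (R1) $(t^*,s)\in\mathcal{S}^{(2)}$, $x\in X_{s^*t}$ and $\theta_{t^*s}(x)=y$; or (R2) $s,t\in E(\mathcal{S})$ and $x=y$. Let $\approx$ be the equivalence relation on $D$ generated by $\sim$, $E=D/{\approx}$, and $[s,x]$ the class of $(s,x)$. For $s\in\mathcal{S}$ put $D_s=\{(p,x)\in D:(s^*,p)\in\mathcal{S}^{(2)},\ x\in X_{p^*ss^*p}\}$, $E_s=\{[p,x]:(p,x)\in D_s\}$, and $\eta_s:E_{s^*}\to E_s$, $\eta_s([p,x])=[sp,x]$ for $(p,x)\in D_{s^*}$. Define $i:X\to E$ by $i(x)=[e,x]$ for any $e\in E(\mathcal{S})$ with $x\in X_e$. The order on $E$: $[s,x]\leqslant[t,y]$ iff there exist $(r,y')\in D$ and $x'\in X$ with $(r,y')\approx(t,y)$, $x'\leqslant y'$, $(r,x')\approx(s,x)$; with it $\eta$ is an ordered global action. *)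

theory Defs
  imports Main
begin

record ('s, 'o) semigroupoid =
  arr :: "'s set"
  dm  :: "'s \<Rightarrow> 'o"
  cd  :: "'s \<Rightarrow> 'o"
  mul :: "'s \<Rightarrow> 's \<Rightarrow> 's"
  sinv :: "'s \<Rightarrow> 's"

definition composable :: "('s, 'o, 'z) semigroupoid_scheme \<Rightarrow> 's \<Rightarrow> 's \<Rightarrow> bool" where
  "composable S s t \<longleftrightarrow> s \<in> arr S \<and> t \<in> arr S \<and> dm S s = cd S t"

definition inverse_semigroupoid :: "('s, 'o, 'z) semigroupoid_scheme \<Rightarrow> bool" where
  "inverse_semigroupoid S \<longleftrightarrow>
     (\<forall>s t. composable S s t \<longrightarrow>
        mul S s t \<in> arr S \<and> dm S (mul S s t) = dm S t \<and> cd S (mul S s t) = cd S s) \<and>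
     (\<forall>r s t. composable S r s \<and> composable S s t \<longrightarrow>
        mul S (mul S r s) t = mul S r (mul S s t)) \<and>
     (\<forall>s \<in> arr S. sinv S s \<in> arr S \<and> dm S (sinv S s) = cd S s \<and> cd S (sinv S s) = dm S s \<and>
        mul S (mul S s (sinv S s)) s = s \<and>
        mul S (mul S (sinv S s) s) (sinv S s) = sinv S s \<and>
        (\<forall>t \<in> arr S. dm S t = cd S s \<and> cd S t = dm S s \<and>
           mul S (mul S s t) s = s \<and> mul S (mul S t s) t = t \<longrightarrow> t = sinv S s))"

definition idems :: "('s, 'o, 'z) semigroupoid_scheme \<Rightarrow> 's set" where
  "idems S = {e \<in> arr S. dm S e = cd S e \<and> mul S e e = e}"

definition nat_le :: "('s, 'o, 'z) semigroupoid_scheme \<Rightarrow> 's \<Rightarrow> 's \<Rightarrow> bool" where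
  "nat_le S s t \<longleftrightarrow> s \<in> arr S \<and> t \<in> arr S \<and> dm S s = dm S t \<and> cd S s = cd S t \<and>
     (\<exists>e \<in> idems S. composable S t e \<and> s = mul S t e)"

record ('s, 'x) pact =
  pdom :: "'s \<Rightarrow> 'x set"
  pmap :: "'s \<Rightarrow> 'x \<Rightarrow> 'x"

definition partial_action ::
  "('s, 'o, 'z) semigroupoid_scheme \<Rightarrow> 'x set \<Rightarrow> ('s, 'x) pact \<Rightarrow> bool" where
  "partial_action S X \<theta> \<longleftrightarrow>
     (\<forall>s \<in> arr S. pdom \<theta> s \<subseteq> X) \<and>
     (\<forall>s \<in> arr S. bij_betw (pmap \<theta> s) (pdom \<theta> (sinv S s)) (pdom \<theta> s) \<and>
        (\<forall>x \<in> pdom \<theta> (sinv S s). pmap \<theta> (sinv S s) (pmap \<theta> s x) = x) \<and>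
        (\<forall>y \<in> pdom \<theta> s. pmap \<theta> s (pmap \<theta> (sinv S s) y) = y)) \<and>
     X = (\<Union>s \<in> arr S. pdom \<theta> s) \<and>
     (\<forall>s t. composable S s t \<longrightarrow>
        (\<forall>x \<in> pdom \<theta> (sinv S t). pmap \<theta> t x \<in> pdom \<theta> (sinv S s) \<longrightarrow>
           x \<in> pdom \<theta> (sinv S (mul S s t)) \<and> pmap \<theta> (mul S s t) x = pmap \<theta> s (pmap \<theta> t x))) \<and>
     (\<forall>s t. nat_le S s t \<longrightarrow> pdom \<theta> s \<subseteq> pdom \<theta> t)"

definition global_action ::
  "('s, 'o, 'z) semigroupoid_scheme \<Rightarrow> 'x set \<Rightarrow> ('s, 'x) pact \<Rightarrow> bool" where
  "global_action S X \<theta> \<longleftrightarrow> partial_action S X \<theta> \<and>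
     (\<forall>s t. composable S s t \<longrightarrow>
        {x \<in> pdom \<theta> (sinv S t). pmap \<theta> t x \<in> pdom \<theta> (sinv S s)} = pdom \<theta> (sinv S (mul S s t)) \<and>
        (\<forall>x \<in> pdom \<theta> (sinv S (mul S s t)). pmap \<theta> (mul S s t) x = pmap \<theta> s (pmap \<theta> t x)))"

definition poset_on :: "'x set \<Rightarrow> ('x \<Rightarrow> 'x \<Rightarrow> bool) \<Rightarrow> bool" where
  "poset_on X le \<longleftrightarrow> (\<forall>x \<in> X. le x x) \<and>
     (\<forall>x \<in> X. \<forall>y \<in> X. \<forall>z \<in> X. le x y \<and> le y z \<longrightarrow> le x z) \<and>
     (\<forall>x \<in> X. \<forall>y \<in> X. le x y \<and> le y x \<longrightarrow> x = y)"

definition order_ideal :: "'x set \<Rightarrow> ('x \<Rightarrow> 'x \<Rightarrow> bool) \<Rightarrow> 'x set \<Rightarrow> bool" where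
  "order_ideal X le A \<longleftrightarrow> A \<subseteq> X \<and> (\<forall>x \<in> X. \<forall>y \<in> A. le x y \<longrightarrow> x \<in> A)"

definition ordered_partial_action ::
  "('s, 'o, 'z) semigroupoid_scheme \<Rightarrow> 'x set \<Rightarrow> ('x \<Rightarrow> 'x \<Rightarrow> bool) \<Rightarrow> ('s, 'x) pact \<Rightarrow> bool" where
  "ordered_partial_action S X le \<theta> \<longleftrightarrow> poset_on X le \<and> partial_action S X \<theta> \<and>
     (\<forall>s \<in> arr S. order_ideal X le (pdom \<theta> s)) \<and>
     (\<forall>s \<in> arr S. \<forall>x \<in> pdom \<theta> (sinv S s). \<forall>y \<in> pdom \<theta> (sinv S s).
        le x y \<longleftrightarrow> le (pmap \<theta> s x) (pmap \<theta> s y))"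

definition ordered_global_action ::
  "('s, 'o, 'z) semigroupoid_scheme \<Rightarrow> 'x set \<Rightarrow> ('x \<Rightarrow> 'x \<Rightarrow> bool) \<Rightarrow> ('s, 'x) pact \<Rightarrow> bool" where
  "ordered_global_action S X le \<theta> \<longleftrightarrow> ordered_partial_action S X le \<theta> \<and> global_action S X \<theta>"

definition equivariant ::
  "('s, 'o, 'z) semigroupoid_scheme \<Rightarrow> 'x set \<Rightarrow> ('s, 'x) pact \<Rightarrow> 'y set \<Rightarrow> ('s, 'y) pact
     \<Rightarrow> ('x \<Rightarrow> 'y) \<Rightarrow> bool" where
  "equivariant S X \<theta> Y \<psi> \<phi> \<longleftrightarrow> (\<forall>x \<in> X. \<phi> x \<in> Y) \<and>
     (\<forall>s \<in> arr S. \<phi> ` pdom \<theta> s \<subseteq> pdom \<psi> s) \<and>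
     (\<forall>s \<in> arr S. \<forall>x \<in> pdom \<theta> (sinv S s). \<phi> (pmap \<theta> s x) = pmap \<psi> s (\<phi> x))"

definition ordered_equivariant ::
  "('s, 'o, 'z) semigroupoid_scheme \<Rightarrow> 'x set \<Rightarrow> ('x \<Rightarrow> 'x \<Rightarrow> bool) \<Rightarrow> ('s, 'x) pact
     \<Rightarrow> 'y set \<Rightarrow> ('y \<Rightarrow> 'y \<Rightarrow> bool) \<Rightarrow> ('s, 'y) pact \<Rightarrow> ('x \<Rightarrow> 'y) \<Rightarrow> bool" where
  "ordered_equivariant S X leX \<theta> Y leY \<psi> \<phi> \<longleftrightarrow> equivariant S X \<theta> Y \<psi> \<phi> \<and>
     (\<forall>x \<in> X. \<forall>y \<in> X. leX x y \<longrightarrow> leY (\<phi> x) (\<phi> y))"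

definition glob_D :: "('s, 'o, 'z) semigroupoid_scheme \<Rightarrow> ('s, 'x) pact \<Rightarrow> ('s \<times> 'x) set" where
  "glob_D S \<theta> = {(s, x). s \<in> arr S \<and> x \<in> pdom \<theta> (mul S (sinv S s) s)}"

definition glob_sim :: "('s, 'o, 'z) semigroupoid_scheme \<Rightarrow> ('s, 'x) pact \<Rightarrow> (('s \<times> 'x) \<times> ('s \<times> 'x)) set" where
  "glob_sim S \<theta> = {((s, x), (t, y)). (s, x) \<in> glob_D S \<theta> \<and> (t, y) \<in> glob_D S \<theta> \<and>
      ((composable S (sinv S t) s \<and> x \<in> pdom \<theta> (mul S (sinv S s) t) \<and>
          pmap \<theta> (mul S (sinv S t) s) x = y)
       \<or> (s \<in> idems S \<and> t \<in> idems S \<and> x = y))}"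

definition glob_approx :: "('s, 'o, 'z) semigroupoid_scheme \<Rightarrow> ('s, 'x) pact \<Rightarrow> (('s \<times> 'x) \<times> ('s \<times> 'x)) set" where
  "glob_approx S \<theta> = ((glob_sim S \<theta> \<union> (glob_sim S \<theta>)\<inverse>)\<^sup>*) \<inter> (glob_D S \<theta> \<times> glob_D S \<theta>)"

definition glob_E :: "('s, 'o, 'z) semigroupoid_scheme \<Rightarrow> ('s, 'x) pact \<Rightarrow> ('s \<times> 'x) set set" where
  "glob_E S \<theta> = glob_D S \<theta> // glob_approx S \<theta>"

definition glob_cls :: "('s, 'o, 'z) semigroupoid_scheme \<Rightarrow> ('s, 'x) pact \<Rightarrow> 's \<Rightarrow> 'x \<Rightarrow> ('s \<times> 'x) set" where
  "glob_cls S \<theta> s x = glob_approx S \<theta> `` {(s, x)}"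

definition glob_Ds :: "('s, 'o, 'z) semigroupoid_scheme \<Rightarrow> ('s, 'x) pact \<Rightarrow> 's \<Rightarrow> ('s \<times> 'x) set" where
  "glob_Ds S \<theta> s = {(p, x) \<in> glob_D S \<theta>. composable S (sinv S s) p \<and>
      x \<in> pdom \<theta> (mul S (mul S (mul S (sinv S p) s) (sinv S s)) p)}"

definition glob_Es :: "('s, 'o, 'z) semigroupoid_scheme \<Rightarrow> ('s, 'x) pact \<Rightarrow> 's \<Rightarrow> ('s \<times> 'x) set set" where
  "glob_Es S \<theta> s = {glob_cls S \<theta> p x | p x. (p, x) \<in> glob_Ds S \<theta> s}"

text \<open>\<open>\<eta>_s([p,x]) = [sp,x]\<close> for \<open>(p,x) \<in> D_{s*}\<close> (computed via a chosen representative).\<close>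
definition glob_eta :: "('s, 'o, 'z) semigroupoid_scheme \<Rightarrow> ('s, 'x) pact \<Rightarrow> 's \<Rightarrow> ('s \<times> 'x) set \<Rightarrow> ('s \<times> 'x) set" where
  "glob_eta S \<theta> s A = (let r = (SOME r. r \<in> glob_Ds S \<theta> (sinv S s) \<and> glob_cls S \<theta> (fst r) (snd r) = A)
      in glob_cls S \<theta> (mul S s (fst r)) (snd r))"

definition glob_action :: "('s, 'o, 'z) semigroupoid_scheme \<Rightarrow> ('s, 'x) pact \<Rightarrow> ('s, ('s \<times> 'x) set) pact" where
  "glob_action S \<theta> = \<lparr>pdom = glob_Es S \<theta>, pmap = glob_eta S \<theta>\<rparr>"

definition glob_i :: "('s, 'o, 'z) semigroupoid_scheme \<Rightarrow> ('s, 'x) pact \<Rightarrow> 'x \<Rightarrow> ('s \<times> 'x) set" where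
  "glob_i S \<theta> x = glob_cls S \<theta> (SOME e. e \<in> idems S \<and> x \<in> pdom \<theta> e) x"

definition glob_le :: "('s, 'o, 'z) semigroupoid_scheme \<Rightarrow> 'x set \<Rightarrow> ('x \<Rightarrow> 'x \<Rightarrow> bool) \<Rightarrow> ('s, 'x) pact
    \<Rightarrow> ('s \<times> 'x) set \<Rightarrow> ('s \<times> 'x) set \<Rightarrow> bool" where
  "glob_le S X le \<theta> A B \<longleftrightarrow> (\<exists>s x t y. (s, x) \<in> glob_D S \<theta> \<and> (t, y) \<in> glob_D S \<theta> \<and>
      A = glob_cls S \<theta> s x \<and> B = glob_cls S \<theta> t y \<and>
      (\<exists>r y' x'. (r, y') \<in> glob_D S \<theta> \<and> x' \<in> X \<and>
         ((r, y'), (t, y)) \<in> glob_approx S \<theta> \<and> le x' y' \<and> ((r, x'), (s, x)) \<in> glob_approx S \<theta>))"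

end

theory Submission
  imports Defs
begin
locale isg =
  fixes S :: "('s, 'o, 'z) semigroupoid_scheme"
  assumes isg: "inverse_semigroupoid S"
begin

abbreviation ml :: "'s \<Rightarrow> 's \<Rightarrow> 's" (infixr "\<cdot>" 70) where "ml \<equiv> mul S"
abbreviation iv :: "'s \<Rightarrow> 's" where "iv \<equiv> sinv S"
abbreviation AR where "AR \<equiv> arr S"
abbreviation ID where "ID \<equiv> idems S"

lemma mul_arr[simp]: "a \<in> AR \<Longrightarrow> b \<in> AR \<Longrightarrow> dm S a = cd S b \<Longrightarrow> a \<cdot> b \<in> AR"
  using isg unfolding inverse_semigroupoid_def composable_def by blast
lemma dm_mul[simp]: "a \<in> AR \<Longrightarrow> b \<in> AR \<Longrightarrow> dm S a = cd S b \<Longrightarrow> dm S (a \<cdot> b) = dm S b"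
  using isg unfolding inverse_semigroupoid_def composable_def by blast
lemma cd_mul[simp]: "a \<in> AR \<Longrightarrow> b \<in> AR \<Longrightarrow> dm S a = cd S b \<Longrightarrow> cd S (a \<cdot> b) = cd S a"
  using isg unfolding inverse_semigroupoid_def composable_def by blast
lemma assoc[simp]: "a \<in> AR \<Longrightarrow> b \<in> AR \<Longrightarrow> c \<in> AR \<Longrightarrow> dm S a = cd S b \<Longrightarrow> dm S b = cd S c \<Longrightarrow>
   (a \<cdot> b) \<cdot> c = a \<cdot> (b \<cdot> c)"
  using isg unfolding inverse_semigroupoid_def composable_def by blast
lemma iv_arr[simp]: "a \<in> AR \<Longrightarrow> iv a \<in> AR"
  using isg unfolding inverse_semigroupoid_def by blast
lemma dm_iv[simp]: "a \<in> AR \<Longrightarrow> dm S (iv a) = cd S a"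
  using isg unfolding inverse_semigroupoid_def by blast
lemma cd_iv[simp]: "a \<in> AR \<Longrightarrow> cd S (iv a) = dm S a"
  using isg unfolding inverse_semigroupoid_def by blast
lemma inv1: "a \<in> AR \<Longrightarrow> (a \<cdot> iv a) \<cdot> a = a"
  using isg unfolding inverse_semigroupoid_def by blast
lemma inv2: "a \<in> AR \<Longrightarrow> (iv a \<cdot> a) \<cdot> iv a = iv a"
  using isg unfolding inverse_semigroupoid_def by blast
lemma inv_uniq: "a \<in> AR \<Longrightarrow> t \<in> AR \<Longrightarrow> dm S t = cd S a \<Longrightarrow> cd S t = dm S a \<Longrightarrow>
   (a \<cdot> t) \<cdot> a = a \<Longrightarrow> (t \<cdot> a) \<cdot> t = t \<Longrightarrow> t = iv a"
  using isg unfolding inverse_semigroupoid_def by blast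

lemma inv1'[simp]: "a \<in> AR \<Longrightarrow> a \<cdot> (iv a \<cdot> a) = a"
  using inv1[of a] by simp
lemma inv2'[simp]: "a \<in> AR \<Longrightarrow> iv a \<cdot> (a \<cdot> iv a) = iv a"
  using inv2[of a] by simp
lemma inv1t[simp]: "a \<in> AR \<Longrightarrow> t \<in> AR \<Longrightarrow> dm S a = cd S t \<Longrightarrow> a \<cdot> (iv a \<cdot> (a \<cdot> t)) = a \<cdot> t"
proof -
  assume h: "a \<in> AR" "t \<in> AR" "dm S a = cd S t"
  have "((a \<cdot> iv a) \<cdot> a) \<cdot> t = a \<cdot> t" using h by (simp only: inv1)
  thus ?thesis using h by (simp del: inv1' inv2')
qed
lemma inv2t[simp]: "a \<in> AR \<Longrightarrow> t \<in> AR \<Longrightarrow> cd S a = cd S t \<Longrightarrow> iv a \<cdot> (a \<cdot> (iv a \<cdot> t)) = iv a \<cdot> t"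
proof -
  assume h: "a \<in> AR" "t \<in> AR" "cd S a = cd S t"
  have "((iv a \<cdot> a) \<cdot> iv a) \<cdot> t = iv a \<cdot> t" using h by (simp only: inv2)
  thus ?thesis using h by (simp del: inv1' inv2')
qed

lemma iv_iv[simp]: "a \<in> AR \<Longrightarrow> iv (iv a) = a"
  by (rule inv_uniq[symmetric]) (simp_all add: inv1 inv2)

lemma idem_def': "e \<in> ID \<longleftrightarrow> e \<in> AR \<and> dm S e = cd S e \<and> e \<cdot> e = e"
  unfolding idems_def by simp

lemma idem_iv: "e \<in> ID \<Longrightarrow> iv e = e"
  unfolding idem_def' by (metis inv_uniq)

lemma idem_tl: "e \<in> ID \<Longrightarrow> t \<in> AR \<Longrightarrow> dm S e = cd S t \<Longrightarrow> e \<cdot> (e \<cdot> t) = e \<cdot> t"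
  unfolding idem_def' by (metis assoc)

lemma ss_idem: "a \<in> AR \<Longrightarrow> iv a \<cdot> a \<in> ID"
  unfolding idem_def' by simp
lemma ss_idem2: "a \<in> AR \<Longrightarrow> a \<cdot> iv a \<in> ID"
  unfolding idem_def' by simp

lemma idem_prod:
  assumes e: "e \<in> ID" and f: "f \<in> ID" and ef: "dm S e = dm S f"
  shows "e \<cdot> f \<in> ID"
proof -
  have eA: "e \<in> AR" "dm S e = cd S e" "e \<cdot> e = e" using e idem_def' by auto
  have fA: "f \<in> AR" "dm S f = cd S f" "f \<cdot> f = f" using f idem_def' by auto
  note facts = eA fA ef
  define x where "x = iv (e \<cdot> f)"
  have xA: "x \<in> AR" "dm S x = cd S e" "cd S x = dm S e" unfolding x_def using facts by auto
  have ee: "\<And>t. t \<in> AR \<Longrightarrow> cd S t = cd S e \<Longrightarrow> e \<cdot> (e \<cdot> t) = e \<cdot> t" using e facts idem_tl by auto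
  have ff: "\<And>t. t \<in> AR \<Longrightarrow> cd S t = cd S e \<Longrightarrow> f \<cdot> (f \<cdot> t) = f \<cdot> t" using f facts idem_tl by auto
  have k1: "e \<cdot> (f \<cdot> (x \<cdot> (e \<cdot> f))) = e \<cdot> f"
    using inv1[of "e \<cdot> f"] facts unfolding x_def by (simp del: inv1')
  have k2: "x \<cdot> (e \<cdot> (f \<cdot> x)) = x"
    using inv2[of "e \<cdot> f"] facts unfolding x_def by (simp del: inv2')
  have k2t: "x \<cdot> (e \<cdot> (f \<cdot> (x \<cdot> t))) = x \<cdot> t" if "t \<in> AR" "cd S t = cd S e" for t
  proof -
    have "(x \<cdot> (e \<cdot> (f \<cdot> x))) \<cdot> t = x \<cdot> t" using k2 by simp
    thus ?thesis using that facts xA by simp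
  qed
  have fxe: "f \<cdot> (x \<cdot> e) = x"
  proof (rule inv_uniq[of "e \<cdot> f", folded x_def])
    show "e \<cdot> f \<in> AR" using facts by simp
    show "f \<cdot> (x \<cdot> e) \<in> AR" using facts xA by simp
    show "dm S (f \<cdot> x \<cdot> e) = cd S (e \<cdot> f)" using facts xA by simp
    show "cd S (f \<cdot> x \<cdot> e) = dm S (e \<cdot> f)" using facts xA by simp
    show "((e \<cdot> f) \<cdot> (f \<cdot> x \<cdot> e)) \<cdot> (e \<cdot> f) = e \<cdot> f"
      using facts xA k1 ee ff by simp
    show "((f \<cdot> x \<cdot> e) \<cdot> (e \<cdot> f)) \<cdot> (f \<cdot> x \<cdot> e) = f \<cdot> x \<cdot> e"
      using facts xA k2t ee ff by simp
  qed
  have xx: "x \<cdot> x = x"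
  proof -
    have "x \<cdot> x = (f \<cdot> (x \<cdot> e)) \<cdot> (f \<cdot> (x \<cdot> e))" using fxe by simp
    also have "\<dots> = f \<cdot> (x \<cdot> (e \<cdot> (f \<cdot> (x \<cdot> e))))" using facts xA by simp
    also have "\<dots> = f \<cdot> ((x \<cdot> (e \<cdot> (f \<cdot> x))) \<cdot> e)" using facts xA by simp
    also have "\<dots> = x" using k2 fxe by simp
    finally show ?thesis .
  qed
  have xI: "x \<in> ID" unfolding idem_def' using xA xx facts by simp
  have efx: "e \<cdot> f = x" using idem_iv[OF xI] x_def facts by (metis iv_iv mul_arr)
  thus "e \<cdot> f \<in> ID" using xI by simp
qed

lemma idem_comm:
  assumes e: "e \<in> ID" and f: "f \<in> ID" and ef: "dm S e = dm S f"
  shows "e \<cdot> f = f \<cdot> e"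
proof -
  have eA: "e \<in> AR" "dm S e = cd S e" "e \<cdot> e = e" using e idem_def' by auto
  have fA: "f \<in> AR" "dm S f = cd S f" "f \<cdot> f = f" using f idem_def' by auto
  note facts = eA fA ef
  have I1: "e \<cdot> f \<in> ID" "f \<cdot> e \<in> ID" using idem_prod assms by auto
  have "f \<cdot> e = iv (e \<cdot> f)"
  proof (rule inv_uniq)
    show "e \<cdot> f \<in> AR" "f \<cdot> e \<in> AR" using facts by auto
    show "dm S (f \<cdot> e) = cd S (e \<cdot> f)" "cd S (f \<cdot> e) = dm S (e \<cdot> f)" using facts by auto
    have "(e \<cdot> f) \<cdot> (e \<cdot> f) = e \<cdot> f" using I1 unfolding idem_def' by simp
    then show "((e \<cdot> f) \<cdot> (f \<cdot> e)) \<cdot> (e \<cdot> f) = e \<cdot> f" using facts idem_tl e f by simp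
    have "(f \<cdot> e) \<cdot> (f \<cdot> e) = f \<cdot> e" using I1 unfolding idem_def' by simp
    then show "((f \<cdot> e) \<cdot> (e \<cdot> f)) \<cdot> (f \<cdot> e) = f \<cdot> e" using facts idem_tl e f by simp
  qed
  then show ?thesis using idem_iv[OF I1(1)] by simp
qed



lemma comm_inst: "e \<in> ID \<Longrightarrow> f \<in> ID \<Longrightarrow> dm S e = dm S f \<Longrightarrow> t \<in> AR \<Longrightarrow> dm S e = cd S t \<Longrightarrow>
   (e \<cdot> f) \<cdot> t = (f \<cdot> e) \<cdot> t"
  by (metis idem_comm)

lemma idem_simps: "e \<in> ID \<Longrightarrow> e \<in> AR" "e \<in> ID \<Longrightarrow> cd S e = dm S e"
  unfolding idem_def' by auto

lemma C1: assumes "a \<in> AR" "b \<in> AR" "cd S a = cd S b" "t \<in> AR" "cd S t = cd S a"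
  shows "a \<cdot> (iv a \<cdot> (b \<cdot> (iv b \<cdot> t))) = b \<cdot> (iv b \<cdot> (a \<cdot> (iv a \<cdot> t)))"
proof -
  have "((a \<cdot> iv a) \<cdot> (b \<cdot> iv b)) \<cdot> t = ((b \<cdot> iv b) \<cdot> (a \<cdot> iv a)) \<cdot> t"
    by (rule comm_inst) (use assms ss_idem2 in simp_all)
  thus ?thesis using assms by simp
qed
lemma C2: assumes "a \<in> AR" "b \<in> AR" "dm S a = dm S b" "t \<in> AR" "cd S t = dm S a"
  shows "iv a \<cdot> (a \<cdot> (iv b \<cdot> (b \<cdot> t))) = iv b \<cdot> (b \<cdot> (iv a \<cdot> (a \<cdot> t)))"
proof -
  have "((iv a \<cdot> a) \<cdot> (iv b \<cdot> b)) \<cdot> t = ((iv b \<cdot> b) \<cdot> (iv a \<cdot> a)) \<cdot> t"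
    by (rule comm_inst) (use assms ss_idem in simp_all)
  thus ?thesis using assms by simp
qed
lemma C3: assumes "a \<in> AR" "b \<in> AR" "dm S a = cd S b" "t \<in> AR" "cd S t = dm S a"
  shows "iv a \<cdot> (a \<cdot> (b \<cdot> (iv b \<cdot> t))) = b \<cdot> (iv b \<cdot> (iv a \<cdot> (a \<cdot> t)))"
proof -
  have "((iv a \<cdot> a) \<cdot> (b \<cdot> iv b)) \<cdot> t = ((b \<cdot> iv b) \<cdot> (iv a \<cdot> a)) \<cdot> t"
    by (rule comm_inst) (use assms ss_idem ss_idem2 in simp_all)
  thus ?thesis using assms by simp
qed
lemma C4: assumes "e \<in> ID" "a \<in> AR" "dm S e = cd S a" "t \<in> AR" "cd S t = dm S e"
  shows "e \<cdot> (a \<cdot> (iv a \<cdot> t)) = a \<cdot> (iv a \<cdot> (e \<cdot> t))"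
proof -
  have "(e \<cdot> (a \<cdot> iv a)) \<cdot> t = ((a \<cdot> iv a) \<cdot> e) \<cdot> t"
    by (rule comm_inst) (use assms ss_idem2 idem_simps in simp_all)
  thus ?thesis using assms idem_simps[OF assms(1)] by simp
qed
lemma C5: assumes "e \<in> ID" "a \<in> AR" "dm S e = dm S a" "t \<in> AR" "cd S t = dm S e"
  shows "e \<cdot> (iv a \<cdot> (a \<cdot> t)) = iv a \<cdot> (a \<cdot> (e \<cdot> t))"
proof -
  have "(e \<cdot> (iv a \<cdot> a)) \<cdot> t = ((iv a \<cdot> a) \<cdot> e) \<cdot> t"
    by (rule comm_inst) (use assms ss_idem idem_simps in simp_all)
  thus ?thesis using assms idem_simps[OF assms(1)] by simp
qed

lemma iv_mul[simp]: assumes "a \<in> AR" "b \<in> AR" "dm S a = cd S b" shows "iv (a \<cdot> b) = iv b \<cdot> iv a"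
proof -
  have c1: "iv a \<cdot> (a \<cdot> (b \<cdot> (iv b \<cdot> b))) = b \<cdot> (iv b \<cdot> (iv a \<cdot> (a \<cdot> b)))"
    by (rule C3) (use assms in simp_all)
  have c2: "iv a \<cdot> (a \<cdot> (b \<cdot> (iv b \<cdot> iv a))) = b \<cdot> (iv b \<cdot> (iv a \<cdot> (a \<cdot> iv a)))"
    by (rule C3) (use assms in simp_all)
  have "iv b \<cdot> iv a = iv (a \<cdot> b)"
  proof (rule inv_uniq)
    show "a \<cdot> b \<in> AR" "iv b \<cdot> iv a \<in> AR" using assms by auto
    show "dm S (iv b \<cdot> iv a) = cd S (a \<cdot> b)" "cd S (iv b \<cdot> iv a) = dm S (a \<cdot> b)" using assms by auto
    have "((a \<cdot> b) \<cdot> (iv b \<cdot> iv a)) \<cdot> (a \<cdot> b) = a \<cdot> (b \<cdot> (iv b \<cdot> (iv a \<cdot> (a \<cdot> b))))" using assms by simp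
    also have "\<dots> = a \<cdot> (iv a \<cdot> (a \<cdot> (b \<cdot> (iv b \<cdot> b))))" using c1 by simp
    also have "\<dots> = a \<cdot> b" using assms by simp
    finally show "((a \<cdot> b) \<cdot> (iv b \<cdot> iv a)) \<cdot> (a \<cdot> b) = a \<cdot> b" .
    have "((iv b \<cdot> iv a) \<cdot> (a \<cdot> b)) \<cdot> (iv b \<cdot> iv a) = iv b \<cdot> (iv a \<cdot> (a \<cdot> (b \<cdot> (iv b \<cdot> iv a))))" using assms by simp
    also have "\<dots> = iv b \<cdot> (b \<cdot> (iv b \<cdot> (iv a \<cdot> (a \<cdot> iv a))))" using c2 by simp
    also have "\<dots> = iv b \<cdot> iv a" using assms by simp
    finally show "((iv b \<cdot> iv a) \<cdot> (a \<cdot> b)) \<cdot> (iv b \<cdot> iv a) = iv b \<cdot> iv a" .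
  qed
  then show ?thesis by simp
qed

lemma nat_leI: "t \<in> AR \<Longrightarrow> e \<in> ID \<Longrightarrow> dm S t = cd S e \<Longrightarrow> nat_le S (t \<cdot> e) t"
  unfolding nat_le_def composable_def by (auto simp: idem_simps)

end

locale pa = isg S for S :: "('s, 'o, 'z) semigroupoid_scheme" +
  fixes X :: "'x set" and \<theta> :: "('s, 'x) pact"
  assumes pa: "partial_action S X \<theta>"
begin

abbreviation Xd where "Xd \<equiv> pdom \<theta>"
abbreviation th where "th \<equiv> pmap \<theta>"

lemma pa_sub: "s \<in> AR \<Longrightarrow> Xd s \<subseteq> X"
  using pa unfolding partial_action_def by blast
lemma pa_union: "X = (\<Union>s \<in> AR. Xd s)"
  using pa unfolding partial_action_def by blast
lemma th_range: "s \<in> AR \<Longrightarrow> x \<in> Xd (iv s) \<Longrightarrow> th s x \<in> Xd s"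
  using pa unfolding partial_action_def bij_betw_def by blast
lemma th_inv1[simp]: "s \<in> AR \<Longrightarrow> x \<in> Xd (iv s) \<Longrightarrow> th (iv s) (th s x) = x"
  using pa unfolding partial_action_def by blast
lemma th_inv2[simp]: "s \<in> AR \<Longrightarrow> y \<in> Xd s \<Longrightarrow> th s (th (iv s) y) = y"
  using pa unfolding partial_action_def by blast
lemma comp: assumes "s \<in> AR" "t \<in> AR" "dm S s = cd S t" "x \<in> Xd (iv t)" "th t x \<in> Xd (iv s)"
  shows "x \<in> Xd (iv t \<cdot> iv s)" "th (s \<cdot> t) x = th s (th t x)"
proof -
  have "composable S s t" using assms unfolding composable_def by simp
  then have "x \<in> Xd (iv (s \<cdot> t)) \<and> th (s \<cdot> t) x = th s (th t x)"
    using pa assms(4,5) unfolding partial_action_def by blast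
  then show "x \<in> Xd (iv t \<cdot> iv s)" "th (s \<cdot> t) x = th s (th t x)" using assms by auto
qed
lemma ord: "nat_le S a b \<Longrightarrow> Xd a \<subseteq> Xd b"
  using pa unfolding partial_action_def by blast

lemma idem_id: assumes e: "e \<in> ID" and x: "x \<in> Xd e" shows "th e x = x"
proof -
  have eA: "e \<in> AR" "e \<cdot> e = e" "dm S e = cd S e" using e idem_def' by auto
  have ie: "iv e = e" using idem_iv e by simp
  have x': "x \<in> Xd (iv e)" using x ie by simp
  have y: "th e x \<in> Xd (iv e)" using th_range[OF eA(1) x'] ie by simp
  have "th (e \<cdot> e) x = th e (th e x)" using comp(2)[OF eA(1) eA(1) eA(3) x' y] .
  then have 1: "th e x = th e (th e x)" using eA by simp
  have "th (iv e) (th e x) = th (iv e) (th e (th e x))" using 1 by simp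
  then have "x = th e x" using th_inv1[OF eA(1) x'] th_inv1[OF eA(1) y] by simp
  then show ?thesis by simp
qed

lemma Xs_sub: assumes "s \<in> AR" shows "Xd s \<subseteq> Xd (s \<cdot> iv s)"
proof
  fix y assume y: "y \<in> Xd s"
  have y': "y \<in> Xd (iv (iv s))" using y assms by simp
  have "th (iv s) y \<in> Xd (iv s)" using th_range[of "iv s" y] y' assms by simp
  then have "y \<in> Xd (iv (iv s) \<cdot> iv s)" using comp(1)[of s "iv s" y] y' assms by simp
  then show "y \<in> Xd (s \<cdot> iv s)" using assms by simp
qed

lemma Xs_sub': assumes "s \<in> AR" shows "Xd (iv s) \<subseteq> Xd (iv s \<cdot> s)"
  using Xs_sub[of "iv s"] assms by simp

lemma restr: assumes b: "b \<in> AR" and e: "e \<in> ID" and be: "dm S b = cd S e"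
   and x: "x \<in> Xd (e \<cdot> iv b)"
  shows "x \<in> Xd (iv b)" "th (b \<cdot> e) x = th b x"
proof -
  have eA: "e \<in> AR" "e \<cdot> e = e" "dm S e = cd S e" using e idem_def' by auto
  have ie: "iv e = e" using idem_iv e by simp
  have ee: "e \<cdot> (e \<cdot> t) = e \<cdot> t" if "t \<in> AR" "cd S t = cd S e" for t using idem_tl e eA that by simp
  have g: "b \<cdot> (e \<cdot> iv b) \<in> ID"
  proof -
    have "b \<cdot> (e \<cdot> (iv b \<cdot> (b \<cdot> (e \<cdot> iv b)))) = b \<cdot> (iv b \<cdot> (b \<cdot> (e \<cdot> (e \<cdot> iv b))))"
      using C5[of e b "e \<cdot> iv b"] e eA b be by simp
    also have "\<dots> = b \<cdot> (e \<cdot> iv b)" using eA b be ee by simp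
    finally show ?thesis unfolding idem_def' using eA b be by simp
  qed
  have "nat_le S (e \<cdot> iv b) (iv b)"
  proof -
    have "iv b \<cdot> (b \<cdot> (e \<cdot> iv b)) = e \<cdot> (iv b \<cdot> (b \<cdot> iv b))"
      using C5[of e b "iv b"] e eA b be by simp
    then have "e \<cdot> iv b = iv b \<cdot> (b \<cdot> (e \<cdot> iv b))" using eA b be by simp
    then show ?thesis using nat_leI[of "iv b" "b \<cdot> (e \<cdot> iv b)"] g b eA be by simp
  qed
  then show xb: "x \<in> Xd (iv b)" using ord x by blast
  have "x \<in> Xd ((e \<cdot> iv b) \<cdot> iv (e \<cdot> iv b))" using Xs_sub[of "e \<cdot> iv b"] x eA b be by auto
  then have x2: "x \<in> Xd (e \<cdot> (iv b \<cdot> (b \<cdot> e)))" using eA b be ie by simp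
  have "nat_le S (e \<cdot> (iv b \<cdot> (b \<cdot> e))) e"
  proof -
    have c: "e \<cdot> (iv b \<cdot> b) = (iv b \<cdot> b) \<cdot> e"
      by (rule idem_comm) (use ss_idem[of b] e b be eA in simp_all)
    have "e \<cdot> (iv b \<cdot> (b \<cdot> e)) = e \<cdot> ((iv b \<cdot> b) \<cdot> e)" using b eA be by simp
    also have "\<dots> = e \<cdot> (e \<cdot> (iv b \<cdot> b))" using c by simp
    also have "\<dots> = e \<cdot> (iv b \<cdot> b)" using ee b be eA by simp
    finally have "e \<cdot> (iv b \<cdot> (b \<cdot> e)) = e \<cdot> (iv b \<cdot> b)" .
    then show ?thesis using nat_leI[of e "iv b \<cdot> b"] ss_idem[of b] e eA b be by simp
  qed
  then have xe: "x \<in> Xd e" using ord x2 by blast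
  have tx: "th e x = x" using idem_id e xe by simp
  have "th (b \<cdot> e) x = th b (th e x)" using comp(2)[of b e x] b eA be xe ie tx xb by simp
  then show "th (b \<cdot> e) x = th b x" using tx by simp
qed

end

locale ga = pa +
  assumes ga: "global_action S X \<theta>"
begin

lemma gcomp: assumes "s \<in> AR" "t \<in> AR" "dm S s = cd S t" "y \<in> Xd (iv t \<cdot> iv s)"
  shows "y \<in> Xd (iv t)" "th t y \<in> Xd (iv s)" "th (s \<cdot> t) y = th s (th t y)"
proof -
  have c: "composable S s t" using assms unfolding composable_def by simp
  have y: "y \<in> Xd (iv (s \<cdot> t))" using assms by simp
  have "{x \<in> Xd (iv t). th t x \<in> Xd (iv s)} = Xd (iv (s \<cdot> t)) \<and>
        (\<forall>x \<in> Xd (iv (s \<cdot> t)). th (s \<cdot> t) x = th s (th t x))"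
    using ga c unfolding global_action_def by blast
  then show "y \<in> Xd (iv t)" "th t y \<in> Xd (iv s)" "th (s \<cdot> t) y = th s (th t y)" using y by auto
qed

lemma gG1: assumes "s \<in> AR" shows "Xd (iv s \<cdot> s) \<subseteq> Xd (iv s)"
  using gcomp(1)[of "iv s" s] assms by auto

end

context isg begin
lemma CT: assumes "e \<in> ID" "f \<in> ID" "dm S e = dm S f" "t \<in> AR" "cd S t = dm S e"
  shows "e \<cdot> (f \<cdot> t) = f \<cdot> (e \<cdot> t)"
  using comm_inst[OF assms(1-4)] assms idem_simps[OF assms(1)] idem_simps[OF assms(2)] by simp

lemma three: assumes e: "e \<in> ID" and f: "f \<in> ID" and g: "g \<in> ID"
  and o: "dm S e = dm S f" "dm S g = dm S e"
  shows "(f \<cdot> (g \<cdot> f)) \<cdot> (e \<cdot> (g \<cdot> e)) = e \<cdot> (g \<cdot> f)" "f \<cdot> (g \<cdot> e) = e \<cdot> (g \<cdot> f)"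
proof -
  note ie = idem_simps[OF e] idem_simps[OF f] idem_simps[OF g]
  have ee: "e \<cdot> e = e" "f \<cdot> f = f" "g \<cdot> g = g" using e f g idem_def' by auto
  have gf: "g \<cdot> f = f \<cdot> g" "g \<cdot> e = e \<cdot> g" "f \<cdot> e = e \<cdot> f" using idem_comm e f g o by auto
  have t1: "f \<cdot> (g \<cdot> e) = e \<cdot> (g \<cdot> f)"
  proof -
    have "f \<cdot> (g \<cdot> e) = f \<cdot> (e \<cdot> g)" using gf by simp
    also have "\<dots> = (f \<cdot> e) \<cdot> g" using ie o by simp
    also have "\<dots> = (e \<cdot> f) \<cdot> g" using gf by simp
    also have "\<dots> = e \<cdot> (f \<cdot> g)" using ie o by simp
    also have "\<dots> = e \<cdot> (g \<cdot> f)" using gf by simp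
    finally show ?thesis .
  qed
  then show "f \<cdot> (g \<cdot> e) = e \<cdot> (g \<cdot> f)" .
  have "(f \<cdot> (g \<cdot> f)) \<cdot> (e \<cdot> (g \<cdot> e)) = (f \<cdot> (f \<cdot> g)) \<cdot> (e \<cdot> (e \<cdot> g))" using gf by simp
  also have "\<dots> = (f \<cdot> g) \<cdot> (e \<cdot> g)" using ee ie o by (simp del: assoc add: assoc[symmetric])
  also have "\<dots> = f \<cdot> (g \<cdot> (e \<cdot> g))" using ie o by simp
  also have "\<dots> = f \<cdot> (g \<cdot> (g \<cdot> e))" using gf by simp
  also have "\<dots> = f \<cdot> (g \<cdot> e)" using ee ie o by (simp del: assoc add: assoc[symmetric])
  also have "\<dots> = e \<cdot> (g \<cdot> f)" using t1 .
  finally show "(f \<cdot> (g \<cdot> f)) \<cdot> (e \<cdot> (g \<cdot> e)) = e \<cdot> (g \<cdot> f)" .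
qed
end


context pa begin

lemma Dmem: "(s, x) \<in> glob_D S \<theta> \<longleftrightarrow> s \<in> AR \<and> x \<in> Xd (iv s \<cdot> s)"
  unfolding glob_D_def by simp

definition RR :: "(('s \<times> 'x) \<times> ('s \<times> 'x)) set" where
  "RR = {((p, x), (q, y)). (p, x) \<in> glob_D S \<theta> \<and> (q, y) \<in> glob_D S \<theta> \<and>
     ((cd S p = cd S q \<and> x \<in> Xd (iv p \<cdot> q) \<and> th (iv q \<cdot> p) x = y) \<or>
      (x \<in> Xd (iv p) \<and> y \<in> Xd (iv q) \<and> th p x = th q y))}"

lemma RR_refl: assumes "(p, x) \<in> glob_D S \<theta>" shows "((p, x), (p, x)) \<in> RR"
proof -
  have p: "p \<in> AR" "x \<in> Xd (iv p \<cdot> p)" using assms Dmem by auto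
  have "th (iv p \<cdot> p) x = x" using idem_id[OF ss_idem[OF p(1)] p(2)] .
  then show ?thesis unfolding RR_def using assms p by auto
qed

lemma RR_sym: assumes "((p, x), (q, y)) \<in> RR" shows "((q, y), (p, x)) \<in> RR"
proof -
  have D: "(p, x) \<in> glob_D S \<theta>" "(q, y) \<in> glob_D S \<theta>" using assms unfolding RR_def by auto
  have pq: "p \<in> AR" "q \<in> AR" using D Dmem by auto
  consider (a) "cd S p = cd S q" "x \<in> Xd (iv p \<cdot> q)" "th (iv q \<cdot> p) x = y"
    | (b) "x \<in> Xd (iv p)" "y \<in> Xd (iv q)" "th p x = th q y"
    using assms unfolding RR_def by auto
  then show ?thesis
  proof cases
    case a
    have x': "x \<in> Xd (iv (iv q \<cdot> p))" using a pq by simp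
    have "y \<in> Xd (iv q \<cdot> p)" using th_range[of "iv q \<cdot> p" x] x' a pq by simp
    moreover have "th (iv p \<cdot> q) y = x" using th_inv1[of "iv q \<cdot> p" x] x' a pq by simp
    ultimately show ?thesis unfolding RR_def using D a by auto
  next
    case b then show ?thesis unfolding RR_def using D by auto
  qed
qed

lemma C1n: assumes "a \<in> AR" "b \<in> AR" "cd S a = cd S b"
  shows "a \<cdot> (iv a \<cdot> (b \<cdot> iv b)) = b \<cdot> (iv b \<cdot> (a \<cdot> iv a))"
proof -
  have "(a \<cdot> iv a) \<cdot> (b \<cdot> iv b) = (b \<cdot> iv b) \<cdot> (a \<cdot> iv a)"
    by (rule idem_comm) (use assms ss_idem2 in simp_all)
  thus ?thesis using assms by simp
qed

lemma T11: assumes pqr: "p \<in> AR" "q \<in> AR" "r \<in> AR" "cd S p = cd S q" "cd S q = cd S r"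
  and x: "x \<in> Xd (iv p \<cdot> q)" and y: "th (iv q \<cdot> p) x = y" "y \<in> Xd (iv q \<cdot> r)"
  shows "x \<in> Xd (iv p \<cdot> r)" "th (iv r \<cdot> p) x = th (iv r \<cdot> q) y"
proof -
  have c: "x \<in> Xd (iv (iv q \<cdot> p) \<cdot> iv (iv r \<cdot> q))"
    "th ((iv r \<cdot> q) \<cdot> (iv q \<cdot> p)) x = th (iv r \<cdot> q) (th (iv q \<cdot> p) x)"
    using comp[of "iv r \<cdot> q" "iv q \<cdot> p" x] pqr x y by auto
  have e: "iv p \<cdot> (q \<cdot> (iv q \<cdot> p)) \<in> ID" using ss_idem2[of "iv p \<cdot> q"] pqr by simp
  have e1: "p \<cdot> (iv p \<cdot> (q \<cdot> (iv q \<cdot> p))) = q \<cdot> (iv q \<cdot> p)" using C1[of p q p] pqr by simp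
  have e2: "q \<cdot> (iv q \<cdot> (p \<cdot> (iv p \<cdot> r))) = p \<cdot> (iv p \<cdot> (q \<cdot> (iv q \<cdot> r)))" by (rule C1) (use pqr in auto)
  have xx: "x \<in> Xd ((iv p \<cdot> (q \<cdot> (iv q \<cdot> p))) \<cdot> iv (iv r \<cdot> p))"
    using c(1) pqr e2 by simp
  have R: "x \<in> Xd (iv (iv r \<cdot> p))" "th ((iv r \<cdot> p) \<cdot> (iv p \<cdot> (q \<cdot> (iv q \<cdot> p)))) x = th (iv r \<cdot> p) x"
    using restr[of "iv r \<cdot> p" "iv p \<cdot> (q \<cdot> (iv q \<cdot> p))" x] e xx pqr idem_simps[OF e] by auto
  show "x \<in> Xd (iv p \<cdot> r)" using R(1) pqr by simp
  show "th (iv r \<cdot> p) x = th (iv r \<cdot> q) y" using R(2) c(2) y e1 pqr by simp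
qed


lemma T13: assumes pq: "p \<in> AR" "q \<in> AR" "cd S p = cd S q"
  and x: "x \<in> Xd (iv p \<cdot> q)" and y: "th (iv q \<cdot> p) x = y" "y \<in> Xd (iv q)"
  shows "x \<in> Xd (iv p)" "th p x = th q y"
proof -
  have c: "x \<in> Xd (iv (iv q \<cdot> p) \<cdot> iv q)"
    "th (q \<cdot> (iv q \<cdot> p)) x = th q (th (iv q \<cdot> p) x)"
    using comp[of q "iv q \<cdot> p" x] pq x y by auto
  have e: "iv p \<cdot> (q \<cdot> (iv q \<cdot> p)) \<in> ID" using ss_idem2[of "iv p \<cdot> q"] pq by simp
  have e1: "p \<cdot> (iv p \<cdot> (q \<cdot> (iv q \<cdot> p))) = q \<cdot> (iv q \<cdot> p)" using C1[of p q p] pq by simp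
  have e2: "q \<cdot> (iv q \<cdot> (p \<cdot> iv p)) = p \<cdot> (iv p \<cdot> (q \<cdot> iv q))" by (rule C1n) (use pq in auto)
  have xx: "x \<in> Xd ((iv p \<cdot> (q \<cdot> (iv q \<cdot> p))) \<cdot> iv p)"
    using c(1) pq e2 by simp
  have R: "x \<in> Xd (iv p)" "th (p \<cdot> (iv p \<cdot> (q \<cdot> (iv q \<cdot> p)))) x = th p x"
    using restr[of p "iv p \<cdot> (q \<cdot> (iv q \<cdot> p))" x] e xx pq idem_simps[OF e] by auto
  show "x \<in> Xd (iv p)" using R(1) .
  show "th p x = th q y" using R(2) c(2) y e1 pq by simp
qed

lemma RR_trans: assumes 1: "((p, x), (q, y)) \<in> RR" and 2: "((q, y), (r, z)) \<in> RR"
  shows "((p, x), (r, z)) \<in> RR"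
proof -
  have D: "(p, x) \<in> glob_D S \<theta>" "(q, y) \<in> glob_D S \<theta>" "(r, z) \<in> glob_D S \<theta>"
    using 1 2 unfolding RR_def by auto
  have pqr: "p \<in> AR" "q \<in> AR" "r \<in> AR" using D Dmem by auto
  have L13: "((a, u), (c, w)) \<in> RR" if "((a, u), (b, v)) \<in> RR" "((b, v), (c, w)) \<in> RR"
    "cd S a = cd S b" "u \<in> Xd (iv a \<cdot> b)" "th (iv b \<cdot> a) u = v"
    "v \<in> Xd (iv b)" "w \<in> Xd (iv c)" "th b v = th c w" for a u b v c w
  proof -
    have Da: "(a, u) \<in> glob_D S \<theta>" "(b, v) \<in> glob_D S \<theta>" "(c, w) \<in> glob_D S \<theta>"
      using that(1,2) unfolding RR_def by auto
    have "a \<in> AR" "b \<in> AR" using Da Dmem by auto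
    then have "u \<in> Xd (iv a)" "th a u = th b v" using T13[of a b u v] that by auto
    then show ?thesis unfolding RR_def using Da that by auto
  qed
  consider (a) "cd S p = cd S q" "x \<in> Xd (iv p \<cdot> q)" "th (iv q \<cdot> p) x = y"
    | (b) "x \<in> Xd (iv p)" "y \<in> Xd (iv q)" "th p x = th q y"
    using 1 unfolding RR_def by auto
  note c1 = this
  consider (a) "cd S q = cd S r" "y \<in> Xd (iv q \<cdot> r)" "th (iv r \<cdot> q) y = z"
    | (b) "y \<in> Xd (iv q)" "z \<in> Xd (iv r)" "th q y = th r z"
    using 2 unfolding RR_def by auto
  note c2 = this
  show ?thesis
  proof (cases rule: c1)
    case a
    show ?thesis
    proof (cases rule: c2)
      case a2: a
      have "x \<in> Xd (iv p \<cdot> r)" "th (iv r \<cdot> p) x = th (iv r \<cdot> q) y"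
        using T11[of p q r x y] pqr a a2 by auto
      then show ?thesis unfolding RR_def using D a a2 by auto
    next
      case b2: b
      show ?thesis using L13[OF 1 2] a b2 by auto
    qed
  next
    case b
    show ?thesis
    proof (cases rule: c2)
      case a2: a
      have s: "((r, z), (q, y)) \<in> RR" using RR_sym[OF 2] .
      have zz: "z \<in> Xd (iv r \<cdot> q)" "th (iv q \<cdot> r) z = y"
      proof -
        have y': "y \<in> Xd (iv (iv r \<cdot> q))" using a2 pqr by simp
        show "z \<in> Xd (iv r \<cdot> q)" using th_range[of "iv r \<cdot> q" y] y' a2 pqr by simp
        show "th (iv q \<cdot> r) z = y" using th_inv1[of "iv r \<cdot> q" y] y' a2 pqr by simp
      qed
      have "((r, z), (p, x)) \<in> RR"
        by (rule L13[OF s RR_sym[OF 1]]) (use a2 zz b in auto)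
      then show ?thesis using RR_sym by blast
    next
      case b2: b
      then show ?thesis unfolding RR_def using D b by auto
    qed
  qed
qed

lemma sim_RR: "glob_sim S \<theta> \<subseteq> RR"
proof (rule subrelI)
  fix a b assume ab: "(a, b) \<in> glob_sim S \<theta>"
  obtain s x t y where st: "a = (s, x)" "b = (t, y)" by (cases a, cases b) auto
  have D: "(s, x) \<in> glob_D S \<theta>" "(t, y) \<in> glob_D S \<theta>" using ab st unfolding glob_sim_def by auto
  have A: "s \<in> AR" "t \<in> AR" using D Dmem by auto
  consider (r1) "composable S (iv t) s" "x \<in> Xd (iv s \<cdot> t)" "th (iv t \<cdot> s) x = y"
    | (r2) "s \<in> ID" "t \<in> ID" "x = y" using ab st unfolding glob_sim_def by auto
  then show "(a, b) \<in> RR"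
  proof cases
    case r1
    then have "cd S s = cd S t" using A unfolding composable_def by simp
    then show ?thesis unfolding RR_def using st D r1 by auto
  next
    case r2
    have xs: "x \<in> Xd s" using D r2 Dmem idem_iv idem_def' by auto
    moreover have "x \<in> Xd t" using D r2 Dmem idem_iv idem_def' by auto
    ultimately show ?thesis unfolding RR_def using st D r2 idem_id idem_iv by auto
  qed
qed

lemma approx_RR: "glob_approx S \<theta> \<subseteq> RR"
proof (rule subrelI)
  fix a b assume ab: "(a, b) \<in> glob_approx S \<theta>"
  then have st: "(a, b) \<in> (glob_sim S \<theta> \<union> (glob_sim S \<theta>)\<inverse>)\<^sup>*" and aD: "a \<in> glob_D S \<theta>"
    unfolding glob_approx_def by auto
  have "(a, b) \<in> RR" using st
  proof (induction rule: rtrancl_induct)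
    case base
    then show ?case using aD RR_refl by (cases a) auto
  next
    case (step b c)
    have "(b, c) \<in> RR" using step(2) sim_RR RR_sym by (cases b, cases c) auto
    then show ?case using step(3) RR_trans by (cases a, cases b, cases c) blast
  qed
  then show "(a, b) \<in> RR" .
qed

end

context pa begin

lemma approx_D: "(a, b) \<in> glob_approx S \<theta> \<Longrightarrow> a \<in> glob_D S \<theta> \<and> b \<in> glob_D S \<theta>"
  unfolding glob_approx_def by auto

lemma sim_D: "(a, b) \<in> glob_sim S \<theta> \<Longrightarrow> a \<in> glob_D S \<theta> \<and> b \<in> glob_D S \<theta>"
  unfolding glob_sim_def by auto

lemma sim_approx: "(a, b) \<in> glob_sim S \<theta> \<Longrightarrow> (a, b) \<in> glob_approx S \<theta>"
  unfolding glob_approx_def using sim_D[of a b] by auto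

lemma approx_sym: "(a, b) \<in> glob_approx S \<theta> \<Longrightarrow> (b, a) \<in> glob_approx S \<theta>"
proof -
  assume ab: "(a, b) \<in> glob_approx S \<theta>"
  have "sym ((glob_sim S \<theta> \<union> (glob_sim S \<theta>)\<inverse>)\<^sup>*)"
    by (rule sym_rtrancl) (auto simp: sym_def)
  moreover have "(a, b) \<in> (glob_sim S \<theta> \<union> (glob_sim S \<theta>)\<inverse>)\<^sup>*" using ab unfolding glob_approx_def by auto
  ultimately have "(b, a) \<in> (glob_sim S \<theta> \<union> (glob_sim S \<theta>)\<inverse>)\<^sup>*" by (rule symD)
  then show ?thesis using ab unfolding glob_approx_def by auto
qed

lemma approx_trans: "(a, b) \<in> glob_approx S \<theta> \<Longrightarrow> (b, c) \<in> glob_approx S \<theta> \<Longrightarrow> (a, c) \<in> glob_approx S \<theta>"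
  unfolding glob_approx_def by (auto intro: rtrancl_trans)

lemma approx_refl: "a \<in> glob_D S \<theta> \<Longrightarrow> (a, a) \<in> glob_approx S \<theta>"
  unfolding glob_approx_def by auto

lemma step1: assumes sp: "s \<in> AR" "p \<in> AR" "dm S s = cd S p"
  and x: "x \<in> Xd (iv p \<cdot> (iv s \<cdot> (s \<cdot> p)))" "x \<in> Xd (iv p)"
  shows "((s \<cdot> p, x), (s \<cdot> (p \<cdot> iv p), th p x)) \<in> glob_sim S \<theta>"
    "th p x \<in> Xd (p \<cdot> (iv p \<cdot> (iv s \<cdot> (s \<cdot> (p \<cdot> iv p)))))"
proof -
  define g where "g = iv p \<cdot> (iv s \<cdot> (s \<cdot> p))"
  have gI: "g \<in> ID" unfolding g_def using ss_idem[of "s \<cdot> p"] sp by simp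
  have gA: "g \<in> AR" "dm S g = dm S p" "cd S g = dm S p" "iv g = g"
    unfolding g_def using sp by auto
  have gg: "g \<cdot> (g \<cdot> t) = g \<cdot> t" if "t \<in> AR" "cd S t = dm S p" for t
    using idem_tl[OF gI] that gA by simp
  have xg: "x \<in> Xd g" using x g_def by simp
  have tg: "th g x = x" using idem_id[OF gI xg] .
  have c: "x \<in> Xd (iv g \<cdot> iv p)" "th (p \<cdot> g) x = th p (th g x)"
    using comp[of p g x] sp gA xg tg x by auto
  have c1: "x \<in> Xd (g \<cdot> iv p)" using c(1) gA by simp
  have c2: "th (p \<cdot> g) x = th p x" using c(2) tg by simp
  have w: "th (p \<cdot> g) x \<in> Xd (p \<cdot> g)" using th_range[of "p \<cdot> g" x] c1 sp gA by simp
  have "Xd (p \<cdot> g) \<subseteq> Xd ((p \<cdot> g) \<cdot> iv (p \<cdot> g))" using Xs_sub[of "p \<cdot> g"] sp gA by simp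
  moreover have "(p \<cdot> g) \<cdot> iv (p \<cdot> g) = p \<cdot> (g \<cdot> iv p)" using sp gA gg by simp
  moreover have gdef2: "p \<cdot> (g \<cdot> iv p) = p \<cdot> (iv p \<cdot> (iv s \<cdot> (s \<cdot> (p \<cdot> iv p))))"
    unfolding g_def using sp by simp
  ultimately show w2: "th p x \<in> Xd (p \<cdot> (iv p \<cdot> (iv s \<cdot> (s \<cdot> (p \<cdot> iv p)))))"
    using w c2 by auto
  have D1: "(s \<cdot> p, x) \<in> glob_D S \<theta>" unfolding Dmem using sp x by simp
  have D2: "(s \<cdot> (p \<cdot> iv p), th p x) \<in> glob_D S \<theta>" unfolding Dmem using sp w2 by simp
  have "composable S (iv (s \<cdot> (p \<cdot> iv p))) (s \<cdot> p)" unfolding composable_def using sp by simp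
  moreover have "x \<in> Xd (iv (s \<cdot> p) \<cdot> (s \<cdot> (p \<cdot> iv p)))" using c1 sp unfolding g_def by simp
  moreover have "th (iv (s \<cdot> (p \<cdot> iv p)) \<cdot> (s \<cdot> p)) x = th p x" using c2 sp unfolding g_def by simp
  ultimately show "((s \<cdot> p, x), (s \<cdot> (p \<cdot> iv p), th p x)) \<in> glob_sim S \<theta>"
    unfolding glob_sim_def using D1 D2 by auto
qed


lemma Ds_mem: "s \<in> AR \<Longrightarrow> (p, x) \<in> glob_Ds S \<theta> (iv s) \<longleftrightarrow> p \<in> AR \<and> dm S s = cd S p \<and>
   x \<in> Xd (iv p \<cdot> p) \<and> x \<in> Xd (iv p \<cdot> (iv s \<cdot> (s \<cdot> p)))"
  unfolding glob_Ds_def composable_def Dmem by auto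


lemma Wlem: assumes s: "s \<in> AR"
  and p: "p \<in> AR" "dm S s = cd S p" "x \<in> Xd (iv p \<cdot> p)" "x \<in> Xd (iv p \<cdot> (iv s \<cdot> (s \<cdot> p)))"
  and q: "q \<in> AR" "dm S s = cd S q" "y \<in> Xd (iv q \<cdot> q)" "y \<in> Xd (iv q \<cdot> (iv s \<cdot> (s \<cdot> q)))"
  and R: "((p, x), (q, y)) \<in> RR"
  shows "((s \<cdot> p, x), (s \<cdot> q, y)) \<in> glob_approx S \<theta>"
proof -
  have D1: "(s \<cdot> p, x) \<in> glob_D S \<theta>" unfolding Dmem using s p by simp
  have D2: "(s \<cdot> q, y) \<in> glob_D S \<theta>" unfolding Dmem using s q by simp
  consider (a) "cd S p = cd S q" "x \<in> Xd (iv p \<cdot> q)" "th (iv q \<cdot> p) x = y"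
    | (b) "x \<in> Xd (iv p)" "y \<in> Xd (iv q)" "th p x = th q y"
    using R unfolding RR_def by auto
  then show ?thesis
  proof cases
    case a
    define g where "g = iv p \<cdot> (iv s \<cdot> (s \<cdot> p))"
    have gI: "g \<in> ID" unfolding g_def using ss_idem[of "s \<cdot> p"] s p by simp
    have gA: "g \<in> AR" "dm S g = dm S p" "cd S g = dm S p" "iv g = g"
      unfolding g_def using s p by auto
    have xg: "x \<in> Xd g" using p g_def by simp
    have tg: "th g x = x" using idem_id[OF gI xg] .
    have x1: "x \<in> Xd (iv (iv q \<cdot> p))" using a p q by simp
    have c: "x \<in> Xd (iv g \<cdot> iv (iv q \<cdot> p))" "th ((iv q \<cdot> p) \<cdot> g) x = th (iv q \<cdot> p) (th g x)"
      using comp[of "iv q \<cdot> p" g x] s p q gA xg tg x1 by auto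
    have e1: "iv s \<cdot> (s \<cdot> (p \<cdot> (iv p \<cdot> q))) = p \<cdot> (iv p \<cdot> (iv s \<cdot> (s \<cdot> q)))"
      by (rule C3) (use s p q a in auto)
    have e2: "iv s \<cdot> (s \<cdot> (p \<cdot> (iv p \<cdot> p))) = p \<cdot> (iv p \<cdot> (iv s \<cdot> (s \<cdot> p)))"
      by (rule C3) (use s p q a in auto)
    have "x \<in> Xd (iv (s \<cdot> p) \<cdot> (s \<cdot> q))" using c(1) gA s p q a e1 unfolding g_def by simp
    moreover have "th (iv (s \<cdot> q) \<cdot> (s \<cdot> p)) x = y" using c(2) tg a s p q e2 unfolding g_def by simp
    moreover have "composable S (iv (s \<cdot> q)) (s \<cdot> p)" unfolding composable_def using s p q by simp
    ultimately have "((s \<cdot> p, x), (s \<cdot> q, y)) \<in> glob_sim S \<theta>"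
      unfolding glob_sim_def using D1 D2 by auto
    then show ?thesis by (rule sim_approx)
  next
    case b
    define w where "w = th p x"
    have w2: "w = th q y" using b w_def by simp
    have st1: "((s \<cdot> p, x), (s \<cdot> (p \<cdot> iv p), w)) \<in> glob_sim S \<theta>"
       "w \<in> Xd (p \<cdot> (iv p \<cdot> (iv s \<cdot> (s \<cdot> (p \<cdot> iv p)))))"
      using step1[of s p x] s p b unfolding w_def by auto
    have st3: "((s \<cdot> q, y), (s \<cdot> (q \<cdot> iv q), w)) \<in> glob_sim S \<theta>"
       "w \<in> Xd (q \<cdot> (iv q \<cdot> (iv s \<cdot> (s \<cdot> (q \<cdot> iv q)))))"
      using step1[of s q y] s q b unfolding w2 by auto
    define e where "e = p \<cdot> iv p"
    define f where "f = q \<cdot> iv q"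
    define h where "h = iv s \<cdot> s"
    have eI: "e \<in> ID" "f \<in> ID" "h \<in> ID" unfolding e_def f_def h_def using ss_idem ss_idem2 s p q by auto
    have eo: "dm S e = dm S f" "dm S h = dm S e" unfolding e_def f_def h_def using s p q by auto
    have E1: "p \<cdot> (iv p \<cdot> (iv s \<cdot> (s \<cdot> (p \<cdot> iv p)))) = e \<cdot> (h \<cdot> e)"
      unfolding e_def h_def using s p by simp
    have E2: "q \<cdot> (iv q \<cdot> (iv s \<cdot> (s \<cdot> (q \<cdot> iv q)))) = f \<cdot> (h \<cdot> f)"
      unfolding f_def h_def using s q by simp
    have E3: "iv (s \<cdot> (p \<cdot> iv p)) \<cdot> (s \<cdot> (q \<cdot> iv q)) = e \<cdot> (h \<cdot> f)"
      unfolding e_def f_def h_def using s p q by simp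
    have E4: "iv (s \<cdot> (q \<cdot> iv q)) \<cdot> (s \<cdot> (p \<cdot> iv p)) = f \<cdot> (h \<cdot> e)"
      unfolding e_def f_def h_def using s p q by simp
    note ids = idem_simps[OF eI(1)] idem_simps[OF eI(2)] idem_simps[OF eI(3)]
    have I1: "e \<cdot> (h \<cdot> e) \<in> ID" "f \<cdot> (h \<cdot> f) \<in> ID" "e \<cdot> (h \<cdot> f) \<in> ID"
      using idem_prod eI eo ids by simp_all
    have wE1: "w \<in> Xd (e \<cdot> (h \<cdot> e))" using st1(2) E1 by simp
    have wE2: "w \<in> Xd (f \<cdot> (h \<cdot> f))" using st3(2) E2 by simp
    have tw: "th (f \<cdot> (h \<cdot> f)) w = w" using idem_id[OF I1(2) wE2] .
    have cc: "w \<in> Xd (iv (f \<cdot> (h \<cdot> f)) \<cdot> iv (e \<cdot> (h \<cdot> e)))"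
      using comp(1)[of "e \<cdot> (h \<cdot> e)" "f \<cdot> (h \<cdot> f)" w] I1 idem_iv[OF I1(1)] idem_iv[OF I1(2)]
        idem_simps[OF I1(1)] idem_simps[OF I1(2)] wE1 wE2 tw ids eo by auto
    have "w \<in> Xd ((f \<cdot> (h \<cdot> f)) \<cdot> (e \<cdot> (h \<cdot> e)))"
      using cc idem_iv[OF I1(1)] idem_iv[OF I1(2)] by simp
    then have wE3: "w \<in> Xd (e \<cdot> (h \<cdot> f))" using three(1)[OF eI eo] by simp
    have tw3: "th (f \<cdot> (h \<cdot> e)) w = w" using idem_id[OF I1(3) wE3] three(2)[OF eI eo] by simp
    have D3: "(s \<cdot> (p \<cdot> iv p), w) \<in> glob_D S \<theta>" using st1(1) sim_D by blast
    have D4: "(s \<cdot> (q \<cdot> iv q), w) \<in> glob_D S \<theta>" using st3(1) sim_D by blast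
    have "composable S (iv (s \<cdot> (q \<cdot> iv q))) (s \<cdot> (p \<cdot> iv p))" unfolding composable_def using s p q by simp
    then have st2: "((s \<cdot> (p \<cdot> iv p), w), (s \<cdot> (q \<cdot> iv q), w)) \<in> glob_sim S \<theta>"
      unfolding glob_sim_def using D3 D4 E3 E4 wE3 tw3 by auto
    show ?thesis
      using approx_trans[OF approx_trans[OF sim_approx[OF st1(1)] sim_approx[OF st2]]
          approx_sym[OF sim_approx[OF st3(1)]]] .
  qed
qed

end

locale M = T: pa S X \<theta> + Z: ga S F \<zeta>
  for S :: "('s, 'o, 'z) semigroupoid_scheme" and X :: "'x set" and \<theta> and F :: "'f set" and \<zeta> +
  fixes le leF j
  assumes ordX: "ordered_partial_action S X le \<theta>"
    and ordF: "ordered_global_action S F leF \<zeta>"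
    and J: "ordered_equivariant S X le \<theta> F leF \<zeta> j"
begin

abbreviation DD where "DD \<equiv> glob_D S \<theta>"
abbreviation AP where "AP \<equiv> glob_approx S \<theta>"
abbreviation cls where "cls \<equiv> glob_cls S \<theta>"

lemma Je: "equivariant S X \<theta> F \<zeta> j" using J unfolding ordered_equivariant_def by (rule conjunct1)
lemma J1: "x \<in> X \<Longrightarrow> j x \<in> F" using Je unfolding equivariant_def by (elim conjE) (rule bspec)
lemma J2: "s \<in> T.AR \<Longrightarrow> x \<in> T.Xd s \<Longrightarrow> j x \<in> Z.Xd s"
proof -
  assume "s \<in> T.AR" "x \<in> T.Xd s"
  moreover have "\<forall>s \<in> T.AR. j ` T.Xd s \<subseteq> Z.Xd s" using Je unfolding equivariant_def by (elim conjE) assumption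
  ultimately show ?thesis by blast
qed
lemma J3: "s \<in> T.AR \<Longrightarrow> x \<in> T.Xd (T.iv s) \<Longrightarrow> j (T.th s x) = Z.th s (j x)"
proof -
  assume "s \<in> T.AR" "x \<in> T.Xd (T.iv s)"
  moreover have "\<forall>s \<in> T.AR. \<forall>x \<in> T.Xd (T.iv s). j (T.th s x) = Z.th s (j x)" using Je unfolding equivariant_def by (elim conjE) assumption
  ultimately show ?thesis by blast
qed
lemma J4: "x \<in> X \<Longrightarrow> y \<in> X \<Longrightarrow> le x y \<Longrightarrow> leF (j x) (j y)"
proof -
  assume "x \<in> X" "y \<in> X" "le x y"
  moreover have "\<forall>x \<in> X. \<forall>y \<in> X. le x y \<longrightarrow> leF (j x) (j y)" using J unfolding ordered_equivariant_def by (rule conjunct2)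
  ultimately show ?thesis by blast
qed
lemma Zord: "s \<in> T.AR \<Longrightarrow> a \<in> Z.Xd (T.iv s) \<Longrightarrow> b \<in> Z.Xd (T.iv s) \<Longrightarrow> leF a b \<longleftrightarrow> leF (Z.th s a) (Z.th s b)"
proof -
  assume "s \<in> T.AR" "a \<in> Z.Xd (T.iv s)" "b \<in> Z.Xd (T.iv s)"
  moreover have "ordered_partial_action S F leF \<zeta>" using ordF unfolding ordered_global_action_def by (rule conjunct1)
  then have "\<forall>s \<in> T.AR. \<forall>x \<in> Z.Xd (T.iv s). \<forall>y \<in> Z.Xd (T.iv s). leF x y \<longleftrightarrow> leF (Z.th s x) (Z.th s y)"
    unfolding ordered_partial_action_def by (elim conjE) assumption
  ultimately show ?thesis by blast
qed

lemma jD: "(s, x) \<in> DD \<Longrightarrow> j x \<in> Z.Xd (T.iv s)"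
proof -
  assume "(s, x) \<in> DD"
  then have s: "s \<in> T.AR" "x \<in> T.Xd (T.iv s \<cdot> s)" using T.Dmem by auto
  then have "j x \<in> Z.Xd (T.iv s \<cdot> s)" using J2[where s="T.iv s \<cdot> s"] by simp
  then show ?thesis using Z.gG1[of s] s by auto
qed

lemma val_sim: assumes "((s, x), (t, y)) \<in> glob_sim S \<theta>"
  shows "Z.th s (j x) = Z.th t (j y)"
proof -
  have D: "(s, x) \<in> DD" "(t, y) \<in> DD" using assms T.sim_D by auto
  have A: "s \<in> T.AR" "t \<in> T.AR" using D T.Dmem by auto
  consider (r1) "composable S (T.iv t) s" "x \<in> T.Xd (T.iv s \<cdot> t)" "T.th (T.iv t \<cdot> s) x = y"
    | (r2) "s \<in> T.ID" "t \<in> T.ID" "x = y" using assms unfolding glob_sim_def by auto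
  then show ?thesis
  proof cases
    case r1
    have st: "cd S s = cd S t" using r1 A unfolding composable_def by simp
    have jx: "j x \<in> Z.Xd (T.iv (T.iv t \<cdot> s))" using J2[where s="T.iv s \<cdot> t" and x=x] r1 A st by simp
    have jy: "j y = Z.th (T.iv t \<cdot> s) (j x)" using J3[where s="T.iv t \<cdot> s" and x=x] r1 A st by simp
    have jyt: "j y \<in> Z.Xd (T.iv t)" using jD D by simp
    have c0: "j x \<in> Z.Xd (T.iv (T.iv t \<cdot> s) \<cdot> T.iv t)"
      "Z.th (t \<cdot> (T.iv t \<cdot> s)) (j x) = Z.th t (Z.th (T.iv t \<cdot> s) (j x))"
      using Z.comp[of t "T.iv t \<cdot> s" "j x"] jx jy[symmetric] jyt A st by auto
    have c: "Z.th (t \<cdot> (T.iv t \<cdot> s)) (j x) = Z.th t (j y)" using c0(2) jy by simp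
    have jx2: "j x \<in> Z.Xd (T.iv s \<cdot> T.iv (t \<cdot> T.iv t))" using c0(1) A st by simp
    have g: "Z.th ((t \<cdot> T.iv t) \<cdot> s) (j x) = Z.th (t \<cdot> T.iv t) (Z.th s (j x))"
      "Z.th s (j x) \<in> Z.Xd (T.iv (t \<cdot> T.iv t))"
      using Z.gcomp[of "t \<cdot> T.iv t" s "j x"] jx2 A st by auto
    have "Z.th (t \<cdot> T.iv t) (Z.th s (j x)) = Z.th s (j x)"
      using Z.idem_id[OF T.ss_idem2[of t]] g(2) A T.idem_iv[OF T.ss_idem2[of t]] by simp
    then show ?thesis using g(1) c A st by simp
  next
    case r2
    have "x \<in> T.Xd s" "y \<in> T.Xd t" using D r2 T.Dmem T.idem_iv T.idem_def' by auto
    then have "j x \<in> Z.Xd s" "j y \<in> Z.Xd t" using J2 A by auto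
    then show ?thesis using Z.idem_id r2 by auto
  qed
qed

lemma val_approx: assumes "((s, x), (t, y)) \<in> AP" shows "Z.th s (j x) = Z.th t (j y)"
proof -
  have "(a, b) \<in> (glob_sim S \<theta> \<union> (glob_sim S \<theta>)\<inverse>)\<^sup>* \<Longrightarrow> Z.th (fst a) (j (snd a)) = Z.th (fst b) (j (snd b))" for a b
  proof (induction rule: rtrancl_induct)
    case base then show ?case by simp
  next
    case (step b c)
    have "Z.th (fst b) (j (snd b)) = Z.th (fst c) (j (snd c))"
      using step(2) val_sim by (cases b, cases c) auto
    then show ?case using step(3) by simp
  qed
  then show ?thesis using assms unfolding glob_approx_def by fastforce
qed

lemma cls_rel: "(s, x) \<in> DD \<Longrightarrow> cls s x = cls t y \<Longrightarrow> ((t, y), (s, x)) \<in> AP"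
  unfolding glob_cls_def using T.approx_refl by blast

lemma cls_eq: "((s, x), (t, y)) \<in> AP \<Longrightarrow> cls s x = cls t y"
  unfolding glob_cls_def using T.approx_sym T.approx_trans by blast

definition kk where "kk A = (SOME v. \<exists>s x. (s, x) \<in> DD \<and> A = cls s x \<and> v = Z.th s (j x))"

lemma kk_cls: assumes "(s, x) \<in> DD" shows "kk (cls s x) = Z.th s (j x)"
  unfolding kk_def
proof (rule someI2)
  show "\<exists>s' x'. (s', x') \<in> DD \<and> cls s x = cls s' x' \<and> Z.th s (j x) = Z.th s' (j x')" using assms by blast
  fix v assume "\<exists>s' x'. (s', x') \<in> DD \<and> cls s x = cls s' x' \<and> v = Z.th s' (j x')"
  then obtain s' x' where h: "(s', x') \<in> DD" "cls s x = cls s' x'" "v = Z.th s' (j x')" by blast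
  have "((s, x), (s', x')) \<in> AP" using cls_rel[OF h(1) h(2)[symmetric]] .
  then show "v = Z.th s (j x)" using val_approx h(3) by simp
qed

lemma E_cases: assumes "A \<in> glob_E S \<theta>" obtains s x where "(s, x) \<in> DD" "A = cls s x"
proof -
  obtain a where "a \<in> DD" "A = AP `` {a}" using assms unfolding glob_E_def quotient_def by blast
  then show ?thesis using that unfolding glob_cls_def by (cases a) auto
qed

end

context M begin

lemma eta_rep: assumes "A \<in> glob_Es S \<theta> (T.iv s)"
  obtains r1 r2 where "(r1, r2) \<in> glob_Ds S \<theta> (T.iv s)" "cls r1 r2 = A"
    "glob_eta S \<theta> s A = cls (s \<cdot> r1) r2"
proof -
  define r where "r = (SOME r. r \<in> glob_Ds S \<theta> (T.iv s) \<and> cls (fst r) (snd r) = A)"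
  have ex: "\<exists>r. r \<in> glob_Ds S \<theta> (T.iv s) \<and> cls (fst r) (snd r) = A"
    using assms unfolding glob_Es_def by auto
  have "r \<in> glob_Ds S \<theta> (T.iv s) \<and> cls (fst r) (snd r) = A" unfolding r_def using someI_ex[OF ex] .
  moreover have "glob_eta S \<theta> s A = cls (s \<cdot> fst r) (snd r)" unfolding glob_eta_def r_def Let_def by simp
  ultimately show ?thesis using that by (cases r) auto
qed

lemma DsD: "(p, x) \<in> glob_Ds S \<theta> s' \<Longrightarrow> (p, x) \<in> DD" unfolding glob_Ds_def by auto

lemma P1: "A \<in> glob_E S \<theta> \<Longrightarrow> kk A \<in> F"
proof -
  assume "A \<in> glob_E S \<theta>"
  then obtain s x where sx: "(s, x) \<in> DD" "A = cls s x" by (rule E_cases)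
  have s: "s \<in> T.AR" using sx T.Dmem by auto
  have "Z.th s (j x) \<in> Z.Xd s" using Z.th_range[OF s jD[OF sx(1)]] .
  then show ?thesis using kk_cls[OF sx(1)] sx(2) Z.pa_sub[OF s] by auto
qed

lemma P2: assumes s: "s \<in> T.AR" and A: "A \<in> glob_Es S \<theta> s" shows "kk A \<in> Z.Xd s"
proof -
  obtain p x where px: "(p, x) \<in> glob_Ds S \<theta> s" "A = cls p x" using A unfolding glob_Es_def by auto
  have px': "(p, x) \<in> glob_Ds S \<theta> (T.iv (T.iv s))" using px s by simp
  have h: "p \<in> T.AR" "dm S (T.iv s) = cd S p" "x \<in> T.Xd (T.iv p \<cdot> (s \<cdot> (T.iv s \<cdot> p)))"
    using T.Ds_mem[of "T.iv s" p x] px' s by auto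
  have jx: "j x \<in> Z.Xd (T.iv p \<cdot> (s \<cdot> (T.iv s \<cdot> p)))" using J2[where s="T.iv p \<cdot> (s \<cdot> (T.iv s \<cdot> p))"] h s by simp
  have "Z.Xd (T.iv (T.iv s \<cdot> p) \<cdot> (T.iv s \<cdot> p)) \<subseteq> Z.Xd (T.iv (T.iv s \<cdot> p))" using Z.gG1[of "T.iv s \<cdot> p"] h s by simp
  then have jx2: "j x \<in> Z.Xd (T.iv p \<cdot> T.iv (T.iv s))" using jx h s by auto
  have "Z.th p (j x) \<in> Z.Xd (T.iv (T.iv s))" using Z.gcomp(2)[of "T.iv s" p "j x"] jx2 h s by simp
  then show ?thesis using kk_cls[OF DsD[OF px(1)]] px(2) s by simp
qed

lemma P3: assumes s: "s \<in> T.AR" and A: "A \<in> glob_Es S \<theta> (T.iv s)"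
  shows "kk (glob_eta S \<theta> s A) = Z.th s (kk A)"
proof -
  obtain r1 r2 where r: "(r1, r2) \<in> glob_Ds S \<theta> (T.iv s)" "cls r1 r2 = A"
    "glob_eta S \<theta> s A = cls (s \<cdot> r1) r2" using eta_rep[OF A] by blast
  have h: "r1 \<in> T.AR" "dm S s = cd S r1" "r2 \<in> T.Xd (T.iv r1 \<cdot> r1)" "r2 \<in> T.Xd (T.iv r1 \<cdot> (T.iv s \<cdot> (s \<cdot> r1)))"
    using T.Ds_mem[OF s] r(1) by auto
  have D2: "(s \<cdot> r1, r2) \<in> DD" unfolding T.Dmem using h s by simp
  have j2: "j r2 \<in> Z.Xd (T.iv (s \<cdot> r1))" using jD[OF D2] .
  have "Z.th (s \<cdot> r1) (j r2) = Z.th s (Z.th r1 (j r2))" using Z.gcomp(3)[of s r1 "j r2"] j2 h s by simp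
  then show ?thesis using kk_cls[OF D2] kk_cls[OF DsD[OF r(1)]] r by simp
qed

lemma P4: assumes A: "A \<in> glob_E S \<theta>" and B: "B \<in> glob_E S \<theta>" and le: "glob_le S X le \<theta> A B"
  shows "leF (kk A) (kk B)"
proof -
  obtain s x t y r y' x' where h: "(s, x) \<in> DD" "(t, y) \<in> DD" "A = cls s x" "B = cls t y"
    "(r, y') \<in> DD" "x' \<in> X" "((r, y'), (t, y)) \<in> AP" "le x' y'" "((r, x'), (s, x)) \<in> AP"
    using le unfolding glob_le_def by blast
  have Dr: "(r, x') \<in> DD" using h(9) T.approx_D by blast
  have kA: "kk A = Z.th r (j x')" using kk_cls[OF Dr] cls_eq[OF h(9)] h(3) by simp
  have kB: "kk B = Z.th r (j y')" using kk_cls[OF h(5)] cls_eq[OF h(7)] h(4) by simp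
  have rA: "r \<in> T.AR" "x' \<in> T.Xd (T.iv r \<cdot> r)" "y' \<in> T.Xd (T.iv r \<cdot> r)" using Dr h(5) T.Dmem by auto
  have "y' \<in> X" using T.pa_sub[of "T.iv r \<cdot> r"] rA by auto
  then have "leF (j x') (j y')" using J4 h(6,8) by simp
  then show ?thesis using Zord[OF rA(1) jD[OF Dr] jD[OF h(5)]] kA kB by simp
qed

lemma existence: "ordered_equivariant S (glob_E S \<theta>) (glob_le S X le \<theta>) (glob_action S \<theta>) F leF \<zeta> kk"
  unfolding ordered_equivariant_def equivariant_def
  using P1 P2 P3 P4 by (auto simp: glob_action_def)

lemma idem_exists: assumes "x \<in> X" shows "\<exists>e. e \<in> T.ID \<and> x \<in> T.Xd e"
proof -
  obtain s where s: "s \<in> T.AR" "x \<in> T.Xd s" using assms T.pa_union by auto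
  then have "x \<in> T.Xd (s \<cdot> T.iv s)" using T.Xs_sub by auto
  then show ?thesis using T.ss_idem2[OF s(1)] by blast
qed

lemma i_eq: assumes "(s, x) \<in> DD" shows "glob_i S \<theta> x = cls (T.iv s \<cdot> s) x"
proof -
  have s: "s \<in> T.AR" "x \<in> T.Xd (T.iv s \<cdot> s)" using assms T.Dmem by auto
  have xX: "x \<in> X" using s T.pa_sub[of "T.iv s \<cdot> s"] by auto
  define e where "e = (SOME e. e \<in> T.ID \<and> x \<in> T.Xd e)"
  have e: "e \<in> T.ID" "x \<in> T.Xd e" unfolding e_def using someI_ex[OF idem_exists[OF xX]] by auto
  have De: "(e, x) \<in> DD" unfolding T.Dmem using e T.idem_iv T.idem_def' by auto
  have Ds: "(T.iv s \<cdot> s, x) \<in> DD" unfolding T.Dmem using s by simp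
  have "((e, x), (T.iv s \<cdot> s, x)) \<in> glob_sim S \<theta>"
    unfolding glob_sim_def using De Ds e T.ss_idem[OF s(1)] by auto
  then have "cls e x = cls (T.iv s \<cdot> s) x" using cls_eq T.sim_approx by blast
  then show ?thesis unfolding glob_i_def e_def by simp
qed

lemma P5: assumes "x \<in> X" shows "kk (glob_i S \<theta> x) = j x"
proof -
  define e where "e = (SOME e. e \<in> T.ID \<and> x \<in> T.Xd e)"
  have e: "e \<in> T.ID" "x \<in> T.Xd e" unfolding e_def using someI_ex[OF idem_exists[OF assms]] by auto
  have eA: "e \<in> T.AR" using e T.idem_def' by auto
  have De: "(e, x) \<in> DD" unfolding T.Dmem using e T.idem_iv T.idem_def' by auto
  have "j x \<in> Z.Xd e" using J2 eA e by auto
  then have "Z.th e (j x) = j x" using Z.idem_id e by auto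
  then show ?thesis unfolding glob_i_def e_def[symmetric] using kk_cls[OF De] by simp
qed

lemma P7: assumes k': "ordered_equivariant S (glob_E S \<theta>) (glob_le S X le \<theta>) (glob_action S \<theta>) F leF \<zeta> k'"
  and ki: "\<forall>x \<in> X. k' (glob_i S \<theta> x) = j x" and A: "A \<in> glob_E S \<theta>"
  shows "k' A = kk A"
proof -
  obtain s x where sx: "(s, x) \<in> DD" "A = cls s x" using A by (rule E_cases)
  have s: "s \<in> T.AR" "x \<in> T.Xd (T.iv s \<cdot> s)" using sx T.Dmem by auto
  have xX: "x \<in> X" using s T.pa_sub[of "T.iv s \<cdot> s"] by auto
  define B where "B = cls (T.iv s \<cdot> s) x"
  have "k' (glob_i S \<theta> x) = j x" using ki xX by blast
  then have kB: "k' B = j x" using i_eq[OF sx(1)] B_def by simp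
  have BD: "(T.iv s \<cdot> s, x) \<in> glob_Ds S \<theta> (T.iv s)"
    using T.Ds_mem[OF s(1), of "T.iv s \<cdot> s" x] s by simp
  have BE: "B \<in> glob_Es S \<theta> (T.iv s)" unfolding glob_Es_def B_def using BD by blast
  have eqv: "\<forall>s \<in> T.AR. \<forall>A \<in> glob_Es S \<theta> (T.iv s). k' (glob_eta S \<theta> s A) = Z.th s (k' A)"
    using k' unfolding ordered_equivariant_def equivariant_def by (simp add: glob_action_def)
  have 1: "k' (glob_eta S \<theta> s B) = Z.th s (j x)" using eqv s BE kB by auto
  obtain r1 r2 where r: "(r1, r2) \<in> glob_Ds S \<theta> (T.iv s)" "cls r1 r2 = B"
    "glob_eta S \<theta> s B = cls (s \<cdot> r1) r2" using eta_rep[OF BE] by blast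
  have h: "r1 \<in> T.AR" "dm S s = cd S r1" "r2 \<in> T.Xd (T.iv r1 \<cdot> r1)" "r2 \<in> T.Xd (T.iv r1 \<cdot> (T.iv s \<cdot> (s \<cdot> r1)))"
    using T.Ds_mem[OF s(1)] r(1) by auto
  have hB: "T.iv s \<cdot> s \<in> T.AR" "dm S s = cd S (T.iv s \<cdot> s)" "x \<in> T.Xd (T.iv (T.iv s \<cdot> s) \<cdot> (T.iv s \<cdot> s))"
    "x \<in> T.Xd (T.iv (T.iv s \<cdot> s) \<cdot> (T.iv s \<cdot> (s \<cdot> (T.iv s \<cdot> s))))"
    using T.Ds_mem[OF s(1)] BD by auto
  have "((r1, r2), (T.iv s \<cdot> s, x)) \<in> AP" using cls_rel[of "T.iv s \<cdot> s" x r1 r2] r(2) B_def BD DsD by auto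
  then have "((r1, r2), (T.iv s \<cdot> s, x)) \<in> T.RR" using T.approx_RR by blast
  then have "((s \<cdot> r1, r2), (s \<cdot> (T.iv s \<cdot> s), x)) \<in> AP"
    using T.Wlem[OF s(1) h] hB by blast
  then have "cls (s \<cdot> r1) r2 = cls s x" using cls_eq s by simp
  then have "glob_eta S \<theta> s B = A" using r(3) sx(2) by simp
  then show ?thesis using 1 kk_cls[OF sx(1)] sx(2) by simp
qed

end

theorem mainTheorem7:
  fixes S :: "('s, 'o) semigroupoid"
    and X :: "'x set" and le :: "'x \<Rightarrow> 'x \<Rightarrow> bool" and \<theta> :: "('s, 'x) pact"
  assumes "inverse_semigroupoid S"
    and "ordered_partial_action S X le \<theta>"
  shows "\<forall>(F :: 'f set) (leF :: 'f \<Rightarrow> 'f \<Rightarrow> bool) (\<zeta> :: ('s, 'f) pact) (j :: 'x \<Rightarrow> 'f).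
           ordered_global_action S F leF \<zeta> \<and> ordered_equivariant S X le \<theta> F leF \<zeta> j \<longrightarrow>
           (\<exists>k. ordered_equivariant S (glob_E S \<theta>) (glob_le S X le \<theta>) (glob_action S \<theta>) F leF \<zeta> k \<and>
                (\<forall>x \<in> X. k (glob_i S \<theta> x) = j x) \<and>
                (\<forall>(s, x) \<in> glob_D S \<theta>. k (glob_cls S \<theta> s x) = pmap \<zeta> s (j x)) \<and>
                (\<forall>k'. ordered_equivariant S (glob_E S \<theta>) (glob_le S X le \<theta>) (glob_action S \<theta>) F leF \<zeta> k' \<and>
                      (\<forall>x \<in> X. k' (glob_i S \<theta> x) = j x) \<longrightarrow> (\<forall>A \<in> glob_E S \<theta>. k' A = k A)))"
proof (intro allI impI)
  fix F :: "'f set" and leF :: "'f \<Rightarrow> 'f \<Rightarrow> bool" and \<zeta> :: "('s, 'f) pact" and j :: "'x \<Rightarrow> 'f"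
  assume H: "ordered_global_action S F leF \<zeta> \<and> ordered_equivariant S X le \<theta> F leF \<zeta> j"
  have H1: "ordered_global_action S F leF \<zeta>" and H2: "ordered_equivariant S X le \<theta> F leF \<zeta> j"
    using H by auto
  have pX: "partial_action S X \<theta>" using assms(2) unfolding ordered_partial_action_def by (elim conjE)
  have gF: "global_action S F \<zeta>" using H1 unfolding ordered_global_action_def by (elim conjE)
  then have pF: "partial_action S F \<zeta>" unfolding global_action_def by (elim conjE)
  interpret MM: M S X \<theta> F \<zeta> le leF j
    by unfold_locales (simp_all only: assms pX pF gF H1 H2)
  show "\<exists>k. ordered_equivariant S (glob_E S \<theta>) (glob_le S X le \<theta>) (glob_action S \<theta>) F leF \<zeta> k \<and>
                (\<forall>x \<in> X. k (glob_i S \<theta> x) = j x) \<and>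
                (\<forall>(s, x) \<in> glob_D S \<theta>. k (glob_cls S \<theta> s x) = pmap \<zeta> s (j x)) \<and>
                (\<forall>k'. ordered_equivariant S (glob_E S \<theta>) (glob_le S X le \<theta>) (glob_action S \<theta>) F leF \<zeta> k' \<and>
                      (\<forall>x \<in> X. k' (glob_i S \<theta> x) = j x) \<longrightarrow> (\<forall>A \<in> glob_E S \<theta>. k' A = k A))"
  proof (rule exI[of _ MM.kk], intro conjI)
    show "ordered_equivariant S (glob_E S \<theta>) (glob_le S X le \<theta>) (glob_action S \<theta>) F leF \<zeta> MM.kk"
      by (rule MM.existence)
    show "\<forall>x \<in> X. MM.kk (glob_i S \<theta> x) = j x" using MM.P5 by blast
    show "\<forall>(s, x) \<in> glob_D S \<theta>. MM.kk (glob_cls S \<theta> s x) = pmap \<zeta> s (j x)"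
      using MM.kk_cls by auto
    show "\<forall>k'. ordered_equivariant S (glob_E S \<theta>) (glob_le S X le \<theta>) (glob_action S \<theta>) F leF \<zeta> k' \<and>
                      (\<forall>x \<in> X. k' (glob_i S \<theta> x) = j x) \<longrightarrow> (\<forall>A \<in> glob_E S \<theta>. k' A = MM.kk A)"
      using MM.P7 by blast
  qed
qed

end
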